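(* Let $\mathcal B_1$ be an arbitrary set of mini-batches and let $f\in\mathcal F$ be a file with $(f,f)\in\mathcal B_1$. If $$n(f)\Bigl(l(f)+\sum_{b\in\mathcal B_1,\ l(b)<l(f)}s(b)\Bigr) < s(f)\Bigl(\sum_{f'\in\mathcal F,\ l(f')<l(f)}n(f')+\sum_{f'\in\mathcal F\setminus\mathcal F(\mathcal B_1),\ l(f')>l(f)}n(f')\Bigr),$$ then $v(\mathcal B_1\setminus\{(f,f)\})<v(\mathcal B_1)$.
   Context: A single-track tape stores a sequence of files $\mathcal F=(f_1,\dots,f_n)$ laid out contiguously from left to right: file $f$ occupies blocks $l(f),\dots,r(f)$, has size $s(f)=r(f)-l(f)+1$, $l(f_1)=1$, $l(f_{i+1})=r(f_i)+1$, and $m=\sum_f s(f)$. The tape moves one block per time step; at time $0$ the head is at position $m$. A file is read when the head traverses it rightwards from $l(f)$ to $r(f)$. $\mathcal R$ is a finite set of requests, all released at time $0$, each associated with a file; $n(f)$ is the number of requests for $f$. A request's response time is the time at which the head starts a rightward reading traversal of its file (all pending requests of a file are serviced simultaneously). A mini-batch is a pair $b=(f,f')$ of files with $l(f)\le l(f')$; $l(b)=l(f)$, $r(b)=r(f')$, $s(b)=r(b)-l(b)+1$, $\mathcal F(b)$ is the set of files $g$ with $l(b)\le l(g)$, $r(g)\le r(b)$, and $\mathcal F(\mathcal B_1)=\bigcup_{b\in\mathcal B_1}\mathcal F(b)$. Given a set $\mathcal B_1$ of mini-batches, its schedule is: Phase 1, the head moves leftwards from $m$ to $1$, and upon reaching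 $l(b)$ for $b\in\mathcal B_1$ executes $b$ (moves rightwards to $r(b)$, reading all files of $\mathcal F(b)$, and returns to $l(b)$), then continues leftwards; Phase 2, the head moves rightwards from $1$ to $m$ reading every file. $v(\mathcal B_1)$ is the total response time of this schedule. *)

theory Defs
  imports Main
begin

text \<open>Files are indexed 0,...,nf-1 (left to right); s i is the size of file i.
  Head position p means the head is at the left end of block p, so reading a
  block takes one time step and reading file f takes s(f) steps.\<close>

definition lpos :: "(nat \<Rightarrow> nat) \<Rightarrow> nat \<Rightarrow> nat" where
  "lpos s i = 1 + (\<Sum>j<i. s j)"

definition rpos :: "(nat \<Rightarrow> nat) \<Rightarrow> nat \<Rightarrow> nat" where
  "rpos s i = lpos s i + s i - 1"

definition tape_len :: "(nat \<Rightarrow> nat) \<Rightarrow> nat \<Rightarrow> nat" where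
  "tape_len s nf = (\<Sum>j<nf. s j)"

definition is_minibatch :: "(nat \<Rightarrow> nat) \<Rightarrow> nat \<Rightarrow> nat \<times> nat \<Rightarrow> bool" where
  "is_minibatch s nf b \<longleftrightarrow> fst b < nf \<and> snd b < nf \<and> lpos s (fst b) \<le> lpos s (snd b)"

definition bl :: "(nat \<Rightarrow> nat) \<Rightarrow> nat \<times> nat \<Rightarrow> nat" where
  "bl s b = lpos s (fst b)"

definition br :: "(nat \<Rightarrow> nat) \<Rightarrow> nat \<times> nat \<Rightarrow> nat" where
  "br s b = rpos s (snd b)"

definition bsize :: "(nat \<Rightarrow> nat) \<Rightarrow> nat \<times> nat \<Rightarrow> nat" where
  "bsize s b = br s b - bl s b + 1"

definition files_of :: "(nat \<Rightarrow> nat) \<Rightarrow> nat \<Rightarrow> nat \<times> nat \<Rightarrow> nat set" where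
  "files_of s nf b = {g. g < nf \<and> bl s b \<le> lpos s g \<and> rpos s g \<le> br s b}"

definition files_of_set :: "(nat \<Rightarrow> nat) \<Rightarrow> nat \<Rightarrow> (nat \<times> nat) set \<Rightarrow> nat set" where
  "files_of_set s nf B = (\<Union>b\<in>B. files_of s nf b)"

text \<open>Execution of a mini-batch with left end p and right end R: the head moves
  rightwards from p through block R (ending at p..R+1) and returns to p.
  The list gives the head positions at the successive time steps after p.\<close>

definition excursion :: "nat \<Rightarrow> nat \<Rightarrow> nat list" where
  "excursion p R = [Suc p..<R + 2] @ rev [p..<Suc R]"

text \<open>Head trajectory: entry t is the head position at time t.
  Phase 1: from m down to 1, executing at each position p the mini-batches
  with left end p (in increasing order of right end).
  Phase 2: from 1 rightwards reading every file.\<close>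

definition trajectory :: "(nat \<Rightarrow> nat) \<Rightarrow> nat \<Rightarrow> (nat \<times> nat) set \<Rightarrow> nat list" where
  "trajectory s nf B =
     concat (map (\<lambda>p. p # concat (map (excursion p)
                   (sorted_list_of_set (br s ` {b \<in> B. bl s b = p}))))
                 (rev [1..<Suc (tape_len s nf)]))
     @ [2..<tape_len s nf + 2]"

definition reads_at :: "(nat \<Rightarrow> nat) \<Rightarrow> nat list \<Rightarrow> nat \<Rightarrow> nat \<Rightarrow> bool" where
  "reads_at s tr f t \<longleftrightarrow> (\<forall>k\<le>s f. t + k < length tr \<and> tr ! (t + k) = lpos s f + k)"

definition resp :: "(nat \<Rightarrow> nat) \<Rightarrow> nat \<Rightarrow> (nat \<times> nat) set \<Rightarrow> nat \<Rightarrow> nat" where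
  "resp s nf B f = (LEAST t. reads_at s (trajectory s nf B) f t)"

definition nreq :: "'r set \<Rightarrow> ('r \<Rightarrow> nat) \<Rightarrow> nat \<Rightarrow> nat" where
  "nreq R fo f = card {r \<in> R. fo r = f}"

definition v :: "(nat \<Rightarrow> nat) \<Rightarrow> nat \<Rightarrow> 'r set \<Rightarrow> ('r \<Rightarrow> nat) \<Rightarrow> (nat \<times> nat) set \<Rightarrow> nat" where
  "v s nf R fo B = (\<Sum>r\<in>R. resp s nf B (fo r))"

end

theory Submission
  imports Defs
begin

definition rd :: "nat list \<Rightarrow> nat \<Rightarrow> nat \<Rightarrow> nat \<Rightarrow> bool" where
  "rd xs a n t \<longleftrightarrow> (\<forall>k\<le>n. t + k < length xs \<and> xs ! (t + k) = a + k)"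

definition goodl :: "(nat \<Rightarrow> nat \<Rightarrow> bool) \<Rightarrow> nat list \<Rightarrow> bool" where
  "goodl P xs \<longleftrightarrow> (\<forall>a n t. 0 < n \<longrightarrow> rd xs a n t \<longrightarrow> P a n)"

lemma rd_app1: "rd xs a n t \<Longrightarrow> rd (xs @ ys) a n t"
  unfolding rd_def by (auto simp: nth_append)

lemma rd_app2: "rd ys a n t \<Longrightarrow> rd (xs @ ys) a n (length xs + t)"
  unfolding rd_def by (auto simp: nth_append)

lemma rd_Cons: "rd (x # ys) a n t \<Longrightarrow> 0 < t \<Longrightarrow> rd ys a n (t - 1)"
  unfolding rd_def by (auto simp: nth_Cons')

lemma rd_Cons0: "rd (x # ys) a n 0 \<Longrightarrow> x = a"
  unfolding rd_def by (drule spec[of _ 0]) simp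

lemma rd_split:
  assumes r: "rd (xs @ ys) a n t" and n: "0 < n"
    and bd: "xs \<noteq> [] \<Longrightarrow> ys \<noteq> [] \<Longrightarrow> hd ys \<le> last xs"
  shows "(t + n < length xs \<and> rd xs a n t) \<or> (length xs \<le> t \<and> rd ys a n (t - length xs))"
proof (cases "t + n < length xs")
  case True
  then show ?thesis using r unfolding rd_def by (auto simp: nth_append)
next
  case F: False
  show ?thesis
  proof (cases "length xs \<le> t")
    case True
    then show ?thesis using r unfolding rd_def by (auto simp: nth_append)
  next
    case False
    define k where "k = length xs - 1 - t"
    have k1: "k < n" "t + k + 1 = length xs" using F False by (auto simp: k_def)
    have xs: "xs \<noteq> []" using False by auto
    have "k + 1 \<le> n" using k1 by simp
    then have "t + (k + 1) < length (xs @ ys)" using r unfolding rd_def by blast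
    then have ys: "ys \<noteq> []" using k1 by auto
    have "k \<le> n" using k1 by simp
    from r[unfolded rd_def, rule_format, OF this] have e1: "(xs @ ys) ! (t + k) = a + k" by blast
    from r[unfolded rd_def, rule_format, OF \<open>k + 1 \<le> n\<close>] have e2: "(xs @ ys) ! (t + k + 1) = a + k + 1"
      by (simp add: add.assoc)
    have "t + k = length xs - 1" using k1 by simp
    then have "(xs @ ys) ! (t + k) = last xs" using k1 xs by (simp add: nth_append last_conv_nth)
    moreover have "(xs @ ys) ! (t + k + 1) = hd ys" using k1 ys by (simp add: nth_append hd_conv_nth)
    ultimately have "hd ys = last xs + 1" using e1 e2 by simp
    then show ?thesis using bd xs ys by simp
  qed
qed

lemma good_append:
  assumes "goodl P xs" "goodl P ys" "xs \<noteq> [] \<Longrightarrow> ys \<noteq> [] \<Longrightarrow> hd ys \<le> last xs"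
  shows "goodl P (xs @ ys)"
  unfolding goodl_def
proof (intro allI impI)
  fix a n t assume "0 < n" "rd (xs @ ys) a n t"
  from rd_split[OF this(2) this(1) assms(3)] assms(1,2) \<open>0 < n\<close> show "P a n"
    unfolding goodl_def by blast
qed

lemma good_Nil: "goodl P []"
  unfolding goodl_def rd_def by auto

lemma good_concat:
  assumes "\<forall>x\<in>set xss. x \<noteq> [] \<and> goodl P x" "sorted_wrt (\<lambda>x y. hd y \<le> last x) xss"
  shows "goodl P (concat xss)"
  using assms
proof (induction xss)
  case Nil then show ?case by (simp add: good_Nil)
next
  case (Cons x xss)
  have g: "goodl P (concat xss)" using Cons by simp
  show ?case
  proof (simp, rule good_append)
    show "goodl P x" using Cons.prems by simp
    show "goodl P (concat xss)" by (rule g)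
    assume "concat xss \<noteq> []"
    then have ne: "xss \<noteq> []" by auto
    then have "hd xss \<in> set xss" by simp
    then have "hd xss \<noteq> []" using Cons.prems(1) by simp
    then have "hd (concat xss) = hd (hd xss)" using ne by (cases xss) auto
    then obtain y where y: "y \<in> set xss" "hd (concat xss) = hd y"
      using \<open>hd xss \<in> set xss\<close> by blast
    then show "hd (concat xss) \<le> last x" using Cons.prems(2) by simp
  qed
qed

lemma sorted_wrt_all: "(\<forall>x\<in>set xs. \<forall>y\<in>set xs. R x y) \<Longrightarrow> sorted_wrt R xs"
  by (induction xs) auto

lemma good_inc:
  assumes "\<And>a n. q \<le> a \<Longrightarrow> a + n \<le> R + 1 \<Longrightarrow> P a n"
  shows "goodl P [q..<R+2]"
  unfolding goodl_def
proof (intro allI impI)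
  fix a n t assume "0 < n" "rd [q..<R + 2] a n t"
  then have r: "\<forall>k\<le>n. t + k < length [q..<R+2] \<and> [q..<R+2] ! (t + k) = a + k" unfolding rd_def by blast
  have "0 \<le> n" "n \<le> n" by auto
  from r[rule_format, OF this(1)] r[rule_format, OF this(2)]
  have h0: "t < length [q..<R+2]" "[q..<R+2] ! t = a" and hn: "t + n < length [q..<R+2]" by auto
  from h0 have "q + t = a" by (simp del: upt_Suc)
  moreover from hn have "t + n < R + 2 - q" by (simp del: upt_Suc)
  ultimately show "P a n" using assms by auto
qed

lemma good_dec: "goodl P (rev [x..<y])"
  unfolding goodl_def
proof (intro allI impI)
  fix a n t assume "0 < n" "rd (rev [x..<y]) a n t"
  then have r: "\<forall>k\<le>n. t + k < length (rev [x..<y]) \<and> rev [x..<y] ! (t + k) = a + k" unfolding rd_def by blast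
  have "0 \<le> n" "1 \<le> n" using \<open>0 < n\<close> by auto
  from r[rule_format, OF this(1)] r[rule_format, OF this(2)]
  have h: "t + 1 < y - x" "rev [x..<y] ! t = a" "rev [x..<y] ! (t+1) = a + 1" by auto
  have e1: "a = x + (y - x - Suc t)" using h(1) h(2) by (simp add: rev_nth)
  have e2: "a + 1 = x + (y - x - Suc (t+1))" using h(1) h(3) by (simp add: rev_nth)
  have "y - x - Suc (t+1) < y - x - Suc t" using h(1) by simp
  then have False using e1 e2 by simp
  then show "P a n" by blast
qed

lemma good_single: "goodl P [q]"
  unfolding goodl_def rd_def
proof (intro allI impI)
  fix a n t assume "0 < n" "\<forall>k\<le>n. t + k < length [q] \<and> [q] ! (t + k) = a + k"
  then have "t + 1 < length [q]" by (metis One_nat_def Suc_leI)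
  then show "P a n" by simp
qed

definition Rs :: "(nat \<Rightarrow> nat) \<Rightarrow> (nat \<times> nat) set \<Rightarrow> nat \<Rightarrow> nat list" where
  "Rs s B q = sorted_list_of_set (br s ` {b \<in> B. bl s b = q})"

definition blk :: "(nat \<Rightarrow> nat) \<Rightarrow> (nat \<times> nat) set \<Rightarrow> nat \<Rightarrow> nat list" where
  "blk s B q = q # concat (map (excursion q) (Rs s B q))"

definition seg :: "nat \<Rightarrow> nat \<Rightarrow> nat list" where
  "seg q R = [q..<R+2] @ rev [Suc q..<Suc R]"

lemma traj_eq: "trajectory s nf B = concat (map (blk s B) (rev [1..<Suc (tape_len s nf)])) @ [2..<tape_len s nf + 2]"
  unfolding trajectory_def blk_def[abs_def] Rs_def ..

lemma exc_regroup: "q \<le> R \<Longrightarrow> q # excursion q R @ xs = seg q R @ (q # xs)"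
proof -
  assume "q \<le> R"
  have 1: "q # [Suc q..<R+2] = [q..<R+2]" using \<open>q \<le> R\<close> by (simp add: upt_conv_Cons)
  have "[q..<Suc R] = q # [Suc q..<Suc R]" using \<open>q \<le> R\<close> by (simp add: upt_conv_Cons)
  then have 2: "rev [q..<Suc R] = rev [Suc q..<Suc R] @ [q]" by simp
  show ?thesis unfolding excursion_def seg_def
    by (simp only: 2 append_Cons[symmetric] 1 append_assoc append_Cons append_Nil)
qed

lemma blk_regroup: "\<forall>R\<in>set rs. q \<le> R \<Longrightarrow> q # concat (map (excursion q) rs) = concat (map (seg q) rs) @ [q]"
proof (induction rs)
  case Nil then show ?case by simp
next
  case (Cons R rs)
  have "q # concat (map (excursion q) (R # rs)) = q # excursion q R @ concat (map (excursion q) rs)" by simp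
  also have "\<dots> = seg q R @ (q # concat (map (excursion q) rs))" using Cons.prems by (simp add: exc_regroup)
  also have "\<dots> = seg q R @ concat (map (seg q) rs) @ [q]" using Cons by simp
  finally show ?case by simp
qed

lemma length_exc: "length (excursion q R) = 2 * (R + 1 - q)"
  unfolding excursion_def length_append length_rev length_upt by simp

lemma set_exc: "x \<in> set (excursion q R) \<Longrightarrow> q \<le> x"
  by (auto simp: excursion_def)

lemma set_blk: "x \<in> set (blk s B q) \<Longrightarrow> q \<le> x"
  by (auto simp: blk_def dest: set_exc)

lemma seg_ne: "q \<le> R \<Longrightarrow> seg q R \<noteq> []" by (simp add: seg_def)
lemma hd_seg: "q \<le> R \<Longrightarrow> hd (seg q R) = q" by (simp add: seg_def upt_conv_Cons del: upt_Suc)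
lemma set_seg: "x \<in> set (seg q R) \<Longrightarrow> q \<le> x" by (auto simp: seg_def)

lemma good_seg:
  assumes "q \<le> R" "\<And>a n. q \<le> a \<Longrightarrow> a + n \<le> R + 1 \<Longrightarrow> P a n"
  shows "goodl P (seg q R)"
  unfolding seg_def
proof (rule good_append)
  show "goodl P [q..<R + 2]" by (rule good_inc) (rule assms(2))
  show "goodl P (rev [Suc q..<Suc R])" by (rule good_dec)
  assume "rev [Suc q..<Suc R] \<noteq> []"
  then have "hd (rev [Suc q..<Suc R]) = R" by (auto simp: hd_rev split: if_splits)
  moreover have "last [q..<R + 2] = R + 1" using assms(1) by (simp del: upt_Suc)
  ultimately show "hd (rev [Suc q..<Suc R]) \<le> last [q..<R + 2]" by simp
qed

lemma good_blk:
  assumes "\<forall>R\<in>set rs. q \<le> R \<and> (\<forall>a n. q \<le> a \<longrightarrow> a + n \<le> R + 1 \<longrightarrow> P a n)"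
  shows "goodl P (q # concat (map (excursion q) rs))"
proof -
  have "q # concat (map (excursion q) rs) = concat (map (seg q) rs @ [[q]])"
    using assms by (simp add: blk_regroup)
  moreover have "goodl P (concat (map (seg q) rs @ [[q]]))"
  proof (rule good_concat)
    show "\<forall>x\<in>set (map (seg q) rs @ [[q]]). x \<noteq> [] \<and> goodl P x"
      using assms by (auto simp: seg_ne good_single intro: good_seg)
    have "\<And>R. R \<in> set rs \<Longrightarrow> q \<le> last (seg q R)"
      using assms last_in_set[OF seg_ne] set_seg by blast
    then have h: "\<forall>x\<in>set (map (seg q) rs @ [[q]]). hd x = q \<and> q \<le> last x"
      using assms by (auto simp: hd_seg)
    show "sorted_wrt (\<lambda>x y. hd y \<le> last x) (map (seg q) rs @ [[q]])"
      by (rule sorted_wrt_all) (use h in auto)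
  qed
  ultimately show ?thesis by simp
qed

lemma last_blk: "\<forall>R\<in>set rs. q \<le> R \<Longrightarrow> last (q # concat (map (excursion q) rs)) = q"
  by (simp add: blk_regroup del: last.simps)

lemma lpos_Suc: "lpos s (Suc i) = lpos s i + s i"
  by (simp add: lpos_def)

lemma lpos_mono: "i \<le> j \<Longrightarrow> lpos s i \<le> lpos s j"
  by (induction j) (auto simp: lpos_Suc le_Suc_eq)

lemma lpos_lt: "i < j \<Longrightarrow> j \<le> nf \<Longrightarrow> \<forall>k<nf. 0 < s k \<Longrightarrow> lpos s i + s i \<le> lpos s j"
proof (induction j)
  case 0 then show ?case by simp
next
  case (Suc j)
  show ?case
  proof (cases "i = j")
    case True then show ?thesis by (simp add: lpos_Suc)
  next
    case False
    then have "lpos s i + s i \<le> lpos s j" using Suc by simp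
    then show ?thesis by (simp add: lpos_Suc)
  qed
qed

lemma lpos_ge1: "1 \<le> lpos s i" by (simp add: lpos_def)

lemma lpos_tape: "lpos s nf = 1 + tape_len s nf" by (simp add: lpos_def tape_len_def)

lemma ord1:
  assumes "\<forall>i<nf. 0 < s i" "f < nf" "g < nf" "lpos s f \<le> lpos s g"
  shows "f \<le> g"
proof (rule ccontr)
  assume "\<not> f \<le> g"
  then have "lpos s g + s g \<le> lpos s f" using lpos_lt[of g f nf s] assms by simp
  then show False using assms by (metis add_le_same_cancel1 le_trans not_less)
qed

lemma ord2:
  assumes "\<forall>i<nf. 0 < s i" "f < nf" "g < nf" "rpos s g \<le> rpos s f"
  shows "g \<le> f"
proof (rule ccontr)
  assume "\<not> g \<le> f"
  then have "lpos s f + s f \<le> lpos s g" using lpos_lt[of f g nf s] assms by simp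
  moreover have "0 < s g" "0 < s f" using assms by auto
  ultimately show False using assms(4) unfolding rpos_def by linarith
qed

lemma lpos_inj:
  assumes "\<forall>i<nf. 0 < s i" "f < nf" "g < nf" "lpos s f = lpos s g"
  shows "f = g"
  using ord1[OF assms(1,2,3)] ord1[OF assms(1,3,2)] assms(4) by simp

lemma rpos_inj:
  assumes "\<forall>i<nf. 0 < s i" "f < nf" "g < nf" "rpos s f = rpos s g"
  shows "f = g"
  using ord2[OF assms(1,2,3)] ord2[OF assms(1,3,2)] assms(4) by simp

lemma end_bound:
  assumes "g < nf" shows "lpos s g + s g \<le> tape_len s nf + 1"
proof -
  have "lpos s (Suc g) \<le> lpos s nf" using assms by (intro lpos_mono) simp
  moreover have "lpos s (Suc g) = lpos s g + s g" by (rule lpos_Suc)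
  moreover have "lpos s nf = 1 + tape_len s nf" by (rule lpos_tape)
  ultimately show ?thesis by linarith
qed

lemma batch_facts:
  assumes "\<forall>i<nf. 0 < s i" "is_minibatch s nf b"
  shows "bl s b \<le> br s b" "1 \<le> bl s b" "br s b \<le> tape_len s nf"
    "bsize s b = br s b + 1 - bl s b" "fst b < nf" "snd b < nf"
proof -
  obtain x y where b: "b = (x, y)" by (cases b)
  have xy: "x < nf" "y < nf" "lpos s x \<le> lpos s y" using assms(2) by (auto simp: is_minibatch_def b)
  have sy: "0 < s y" using assms(1) xy by simp
  show "bl s b \<le> br s b" using xy sy by (simp add: b bl_def br_def rpos_def)
  then show "bsize s b = br s b + 1 - bl s b" by (simp add: bsize_def)
  show "1 \<le> bl s b" unfolding bl_def by (rule lpos_ge1)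
  show "br s b \<le> tape_len s nf" using end_bound[OF xy(2), of s] sy by (simp add: b br_def rpos_def)
  show "fst b < nf" "snd b < nf" using xy b by auto
qed

lemma finite_B:
  assumes "\<forall>b\<in>B. is_minibatch s nf b" shows "finite B"
proof -
  have "B \<subseteq> {..<nf} \<times> {..<nf}" using assms by (auto simp: is_minibatch_def)
  then show ?thesis by (rule finite_subset) simp
qed

lemma set_Rs: "finite B \<Longrightarrow> set (Rs s B q) = br s ` {b \<in> B. bl s b = q}"
  by (simp add: Rs_def)

lemma Rs_ge:
  assumes "\<forall>i<nf. 0 < s i" "\<forall>b\<in>B. is_minibatch s nf b" "R \<in> set (Rs s B q)"
  shows "q \<le> R"
  using assms finite_B[OF assms(2)] batch_facts[OF assms(1)] by (auto simp: set_Rs)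

lemma rd_phase2:
  assumes "P \<noteq> []" "last P = 1" "1 \<le> a" "a + n \<le> m + 1"
  shows "rd (P @ [2..<m+2]) a n (length P - 1 + (a - 1))"
  unfolding rd_def
proof (intro allI impI conjI)
  fix k assume k: "k \<le> n"
  have "length (P @ [2..<m + 2]) = length P + m" by (simp del: upt_Suc)
  moreover have "1 \<le> length P" using assms(1) by (cases P) auto
  ultimately show "length P - 1 + (a - 1) + k < length (P @ [2..<m + 2])" using assms k by arith
  show "(P @ [2..<m + 2]) ! (length P - 1 + (a - 1) + k) = a + k"
  proof (cases "a - 1 + k = 0")
    case True
    then have "a = 1" "k = 0" using assms by auto
    then show ?thesis using assms by (simp add: nth_append last_conv_nth)
  next
    case False
    moreover have "1 \<le> length P" using assms(1) by (cases P) auto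
    ultimately have i: "length P - 1 + (a - 1) + k = length P + (a + k - 2)" using assms by arith
    have "a + k - 2 < m" using assms k False by auto
    have "(P @ [2..<m+2]) ! (length P + (a+k-2)) = [2..<m+2] ! (a+k-2)" by (simp add: nth_append del: upt_Suc)
    also have "\<dots> = 2 + (a+k-2)" using \<open>a + k - 2 < m\<close> by (intro nth_upt) simp
    also have "\<dots> = a + k" using False assms by simp
    finally show ?thesis unfolding i .
  qed
qed

lemma traj_read:
  assumes sizes: "\<forall>i<nf. 0 < s i" and bt: "\<forall>b\<in>B. is_minibatch s nf b" and g: "g < nf"
  shows "rd (trajectory s nf B) (lpos s g) (s g)
           (length (concat (map (blk s B) (rev [1..<Suc (tape_len s nf)]))) - 1 + (lpos s g - 1))"
proof -
  let ?m = "tape_len s nf"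
  have "lpos s g + s g \<le> ?m + 1" by (rule end_bound[OF g])
  moreover have "0 < s g" using sizes g by simp
  ultimately have m1: "1 \<le> ?m" using lpos_ge1[of s g] by linarith
  have "[1..<Suc ?m] = 1 # [Suc 1..<Suc ?m]" using m1 by (intro upt_conv_Cons) simp
  then have "rev [1..<Suc ?m] = rev [Suc 1..<Suc ?m] @ [1]" by simp
  then have eq: "concat (map (blk s B) (rev [1..<Suc ?m])) = concat (map (blk s B) (rev [Suc 1..<Suc ?m])) @ blk s B 1"
    by simp
  have l1: "last (blk s B 1) = 1" unfolding blk_def
    by (rule last_blk) (use Rs_ge[OF sizes bt] in blast)
  have ne: "blk s B 1 \<noteq> []" by (simp add: blk_def)
  show ?thesis unfolding traj_eq
    by (rule rd_phase2) (use eq l1 ne lpos_ge1[of s g] end_bound[OF g, of s] in auto)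
qed

lemma reads_rd: "reads_at s tr g t = rd tr (lpos s g) (s g) t"
  by (simp add: reads_at_def rd_def)

lemma resp_props:
  assumes sizes: "\<forall>i<nf. 0 < s i" and bt: "\<forall>b\<in>B. is_minibatch s nf b" and g: "g < nf"
  shows "rd (trajectory s nf B) (lpos s g) (s g) (resp s nf B g)"
    "\<And>t. rd (trajectory s nf B) (lpos s g) (s g) t \<Longrightarrow> resp s nf B g \<le> t"
proof -
  have ex: "\<exists>t. reads_at s (trajectory s nf B) g t" using traj_read[OF assms] by (auto simp: reads_rd)
  show "rd (trajectory s nf B) (lpos s g) (s g) (resp s nf B g)"
    using LeastI_ex[OF ex] by (simp add: resp_def reads_rd)
  fix t assume "rd (trajectory s nf B) (lpos s g) (s g) t"
  then show "resp s nf B g \<le> t" unfolding resp_def by (intro Least_le) (simp add: reads_rd)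
qed

lemma rpos_mono:
  assumes "\<forall>i<nf. 0 < s i" "f < nf" "g < nf" "f \<le> g"
  shows "rpos s f \<le> rpos s g"
proof (cases "f = g")
  case True then show ?thesis by simp
next
  case False
  then have "lpos s f + s f \<le> lpos s g" using lpos_lt[of f g nf s] assms by simp
  moreover have "0 < s g" "0 < s f" using assms by auto
  ultimately show ?thesis unfolding rpos_def by linarith
qed

lemma upt_split3:
  assumes "1 \<le> p" "p \<le> m"
  shows "rev [1..<Suc m] = rev [Suc p..<Suc m] @ p # rev [1..<p]"
proof -
  have "[1..<p + (Suc m - p)] = [1..<p] @ [p..<p + (Suc m - p)]" using assms by (intro upt_add_eq_append) simp
  moreover have "p + (Suc m - p) = Suc m" using assms by simp
  moreover have "[p..<Suc m] = p # [Suc p..<Suc m]" using assms by (intro upt_conv_Cons) simp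
  ultimately have "[1..<Suc m] = [1..<p] @ p # [Suc p..<Suc m]" by simp
  then show ?thesis by simp
qed

context
  fixes s :: "nat \<Rightarrow> nat" and nf :: nat and B :: "(nat \<times> nat) set" and f :: nat
  assumes sizes: "\<forall>i<nf. 0 < s i"
    and batches: "\<forall>b\<in>B. is_minibatch s nf b"
    and f_file: "f < nf"
    and ff: "(f, f) \<in> B"
begin

lemma batches': "\<forall>b\<in>B - {(f,f)}. is_minibatch s nf b"
  using batches by blast

lemma finB: "finite B" by (rule finite_B[OF batches])

lemma blk_same: "q \<noteq> lpos s f \<Longrightarrow> blk s (B - {(f,f)}) q = blk s B q"
proof -
  assume "q \<noteq> lpos s f"
  then have "{b \<in> B - {(f,f)}. bl s b = q} = {b \<in> B. bl s b = q}" by (auto simp: bl_def)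
  then show ?thesis by (simp add: blk_def Rs_def)
qed

lemma Rs_split: "Rs s B (lpos s f) = rpos s f # Rs s (B - {(f,f)}) (lpos s f)"
proof -
  let ?X = "br s ` {b \<in> B. bl s b = lpos s f}"
  have fin: "finite ?X" using finB by simp
  have mem: "rpos s f \<in> ?X" using ff by (force simp: bl_def br_def)
  have le: "\<forall>x\<in>?X. rpos s f \<le> x"
  proof
    fix x assume "x \<in> ?X"
    then obtain x1 y1 where b: "(x1, y1) \<in> B" "lpos s x1 = lpos s f" "x = rpos s y1"
      by (auto simp: bl_def br_def)
    have mb: "x1 < nf" "y1 < nf" "lpos s x1 \<le> lpos s y1" using batches b(1) by (auto simp: is_minibatch_def)
    have "f \<le> y1" using ord1[OF sizes f_file mb(2)] mb(3) b(2) by simp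
    then show "rpos s f \<le> x" using rpos_mono[OF sizes f_file mb(2)] b(3) by simp
  qed
  have mn: "Min ?X = rpos s f" using fin mem le by (intro Min_eqI) auto
  have eq: "?X - {rpos s f} = br s ` {b \<in> B - {(f,f)}. bl s b = lpos s f}"
  proof
    show "?X - {rpos s f} \<subseteq> br s ` {b \<in> B - {(f,f)}. bl s b = lpos s f}"
    proof
      fix x assume "x \<in> ?X - {rpos s f}"
      then obtain b where "b \<in> B" "bl s b = lpos s f" "x = br s b" "x \<noteq> rpos s f" by auto
      moreover then have "b \<noteq> (f,f)" by (auto simp: br_def)
      ultimately show "x \<in> br s ` {b \<in> B - {(f,f)}. bl s b = lpos s f}" by auto
    qed
    show "br s ` {b \<in> B - {(f,f)}. bl s b = lpos s f} \<subseteq> ?X - {rpos s f}"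
    proof
      fix x assume "x \<in> br s ` {b \<in> B - {(f,f)}. bl s b = lpos s f}"
      then obtain b0 where b0: "b0 \<in> B - {(f,f)}" "bl s b0 = lpos s f" "x = br s b0" by blast
      obtain x1 y1 where "b0 = (x1, y1)" by (cases b0)
      then have b: "(x1, y1) \<in> B" "(x1, y1) \<noteq> (f, f)" "lpos s x1 = lpos s f" "x = rpos s y1"
        using b0 by (auto simp: bl_def br_def)
      have mb: "x1 < nf" "y1 < nf" using batches b(1) by (auto simp: is_minibatch_def)
      have "x1 = f" using lpos_inj[OF sizes mb(1) f_file b(3)] .
      then have "y1 \<noteq> f" using b(2) by simp
      then have "x \<noteq> rpos s f" using rpos_inj[OF sizes mb(2) f_file] b(4) by auto
      then show "x \<in> ?X - {rpos s f}" using b by (force simp: bl_def br_def)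
    qed
  qed
  have "Rs s B (lpos s f) = Min ?X # sorted_list_of_set (?X - {Min ?X})"
    unfolding Rs_def using fin mem by (intro sorted_list_of_set_nonempty) auto
  then show ?thesis unfolding mn eq Rs_def by simp
qed

end

definition Apre :: "(nat \<Rightarrow> nat) \<Rightarrow> nat \<Rightarrow> (nat \<times> nat) set \<Rightarrow> nat \<Rightarrow> nat list" where
  "Apre s nf B p = concat (map (blk s B) (rev [Suc p..<Suc (tape_len s nf)]))"

definition Dsuf :: "(nat \<Rightarrow> nat) \<Rightarrow> (nat \<times> nat) set \<Rightarrow> nat \<Rightarrow> nat list" where
  "Dsuf s B p = concat (map (blk s B) (rev [1..<p]))"

lemma lenD:
  assumes sizes: "\<forall>i<nf. 0 < s i" and bt: "\<forall>b\<in>B. is_minibatch s nf b"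
  shows "length (Dsuf s B p) \<le> (p - 1) + 2 * (\<Sum>b\<in>{b \<in> B. bl s b < p}. bsize s b)"
proof -
  have finB: "finite B" by (rule finite_B[OF bt])
  have lb: "length (blk s B q) \<le> 1 + 2 * (\<Sum>b\<in>{b \<in> B. bl s b = q}. bsize s b)" for q
  proof -
    have d: "distinct (Rs s B q)" by (simp add: Rs_def)
    have "length (blk s B q) = 1 + sum_list (map (\<lambda>R. 2 * (R + 1 - q)) (Rs s B q))"
      by (simp add: blk_def length_concat length_exc comp_def)
    also have "sum_list (map (\<lambda>R. 2 * (R + 1 - q)) (Rs s B q)) = (\<Sum>R\<in>br s ` {b \<in> B. bl s b = q}. 2 * (R + 1 - q))"
      using d finB by (simp add: sum_list_distinct_conv_sum_set set_Rs)
    also have "\<dots> \<le> (\<Sum>b\<in>{b \<in> B. bl s b = q}. 2 * (br s b + 1 - q))"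
      using sum_image_le[of "{b \<in> B. bl s b = q}" "\<lambda>R. 2 * (R + 1 - q)" "br s"] finB by (simp add: comp_def)
    also have "\<dots> = (\<Sum>b\<in>{b \<in> B. bl s b = q}. 2 * bsize s b)"
      using batch_facts(4)[OF sizes] bt by (intro sum.cong) auto
    finally show ?thesis by (simp add: sum_distrib_left)
  qed
  have "length (Dsuf s B p) = (\<Sum>q\<in>{1..<p}. length (blk s B q))"
    unfolding Dsuf_def length_concat map_map
    by (simp add: sum_list_distinct_conv_sum_set comp_def)
  also have "\<dots> \<le> (\<Sum>q\<in>{1..<p}. 1 + 2 * (\<Sum>b\<in>{b \<in> B. bl s b = q}. bsize s b))"
    by (intro sum_mono lb)
  also have "\<dots> = (\<Sum>q\<in>{1..<p}. (1::nat)) + 2 * (\<Sum>q\<in>{1..<p}. (\<Sum>b\<in>{b \<in> B. bl s b = q}. bsize s b))"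
    by (simp only: sum.distrib sum_distrib_left)
  also have "(\<Sum>q\<in>{1..<p}. (1::nat)) = p - 1" by simp
  also have "(\<Sum>q\<in>{1..<p}. (\<Sum>b\<in>{b \<in> B. bl s b = q}. bsize s b)) = (\<Sum>q\<in>{1..<p}. (\<Sum>b\<in>{x \<in> {b \<in> B. bl s b < p}. bl s x = q}. bsize s b))"
    by (intro sum.cong) auto
  also have "\<dots> = (\<Sum>b\<in>{b \<in> B. bl s b < p}. bsize s b)"
  proof (rule sum.group)
    show "finite {b \<in> B. bl s b < p}" using finB by simp
    show "finite {1..<p}" by simp
    show "bl s ` {b \<in> B. bl s b < p} \<subseteq> {1..<p}" using batch_facts(2)[OF sizes] bt by auto
  qed
  finally show ?thesis by simp
qed

context
  fixes s :: "nat \<Rightarrow> nat" and nf :: nat and B :: "(nat \<times> nat) set" and f :: nat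
  assumes sizes: "\<forall>i<nf. 0 < s i"
    and batches: "\<forall>b\<in>B. is_minibatch s nf b"
    and f_file: "f < nf"
    and ff: "(f, f) \<in> B"
begin

lemma basic: "1 \<le> lpos s f" "lpos s f \<le> tape_len s nf" "lpos s f \<le> rpos s f" "rpos s f + 1 = lpos s f + s f"
  "0 < s f"
proof -
  show "1 \<le> lpos s f" by (rule lpos_ge1)
  show "0 < s f" using sizes f_file by simp
  then show "lpos s f \<le> tape_len s nf" using end_bound[OF f_file, of s] by simp
  show "lpos s f \<le> rpos s f" "rpos s f + 1 = lpos s f + s f" using \<open>0 < s f\<close> by (auto simp: rpos_def)
qed

lemma decomp:
  "trajectory s nf B = Apre s nf B (lpos s f) @ seg (lpos s f) (rpos s f) @
     (lpos s f # (concat (map (excursion (lpos s f)) (Rs s (B - {(f,f)}) (lpos s f))) @ Dsuf s B (lpos s f) @ [2..<tape_len s nf + 2]))"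
  "trajectory s nf (B - {(f,f)}) = Apre s nf B (lpos s f) @
     (lpos s f # (concat (map (excursion (lpos s f)) (Rs s (B - {(f,f)}) (lpos s f))) @ Dsuf s B (lpos s f) @ [2..<tape_len s nf + 2]))"
  "concat (map (blk s (B - {(f,f)})) (rev [1..<Suc (tape_len s nf)])) = Apre s nf B (lpos s f) @
     (lpos s f # (concat (map (excursion (lpos s f)) (Rs s (B - {(f,f)}) (lpos s f))) @ Dsuf s B (lpos s f)))"
proof -
  let ?p = "lpos s f" and ?m = "tape_len s nf" and ?B' = "B - {(f,f)}"
  have sp: "rev [1..<Suc ?m] = rev [Suc ?p..<Suc ?m] @ ?p # rev [1..<?p]"
    using basic by (intro upt_split3) auto
  have bp: "blk s B ?p = seg ?p (rpos s f) @ (?p # concat (map (excursion ?p) (Rs s ?B' ?p)))"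
    unfolding blk_def Rs_split[OF sizes batches f_file ff] using basic
    by (simp add: exc_regroup)
  have bp': "blk s ?B' ?p = ?p # concat (map (excursion ?p) (Rs s ?B' ?p))" by (simp add: blk_def)
  have A': "map (blk s ?B') (rev [Suc ?p..<Suc ?m]) = map (blk s B) (rev [Suc ?p..<Suc ?m])"
    by (intro map_cong refl blk_same[OF sizes batches f_file ff]) auto
  have D': "map (blk s ?B') (rev [1..<?p]) = map (blk s B) (rev [1..<?p])"
    by (intro map_cong refl blk_same[OF sizes batches f_file ff]) auto
  show "trajectory s nf B = Apre s nf B ?p @ seg ?p (rpos s f) @
     (?p # (concat (map (excursion ?p) (Rs s ?B' ?p)) @ Dsuf s B ?p @ [2..<?m + 2]))"
    unfolding traj_eq sp Apre_def Dsuf_def by (simp add: bp)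
  show "concat (map (blk s ?B') (rev [1..<Suc ?m])) = Apre s nf B ?p @
     (?p # (concat (map (excursion ?p) (Rs s ?B' ?p)) @ Dsuf s B ?p))"
    unfolding sp Apre_def Dsuf_def map_append list.map(2) A' D' bp' by (simp del: upt_Suc)
  then show "trajectory s nf ?B' = Apre s nf B ?p @
     (?p # (concat (map (excursion ?p) (Rs s ?B' ?p)) @ Dsuf s B ?p @ [2..<?m + 2]))"
    unfolding traj_eq by simp
qed

lemma setA: "x \<in> set (Apre s nf B (lpos s f)) \<Longrightarrow> lpos s f < x"
  unfolding Apre_def by (auto dest!: set_blk)

lemma goodA: "goodl (\<lambda>a n. \<exists>b\<in>B. lpos s f < bl s b \<and> bl s b \<le> a \<and> a + n \<le> br s b + 1) (Apre s nf B (lpos s f))"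
  unfolding Apre_def
proof (rule good_concat)
  let ?p = "lpos s f"
  show "\<forall>x\<in>set (map (blk s B) (rev [Suc ?p..<Suc (tape_len s nf)])). x \<noteq> [] \<and>
        goodl (\<lambda>a n. \<exists>b\<in>B. ?p < bl s b \<and> bl s b \<le> a \<and> a + n \<le> br s b + 1) x"
  proof
    fix x assume "x \<in> set (map (blk s B) (rev [Suc ?p..<Suc (tape_len s nf)]))"
    then obtain q where q0: "q \<in> set (rev [Suc ?p..<Suc (tape_len s nf)])" "x = blk s B q" by (auto simp only: set_map)
    then have q: "?p < q" "x = blk s B q" by auto
    have "goodl (\<lambda>a n. \<exists>b\<in>B. ?p < bl s b \<and> bl s b \<le> a \<and> a + n \<le> br s b + 1) (blk s B q)"
      unfolding blk_def
    proof (rule good_blk, intro ballI conjI allI impI)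
      fix R assume R: "R \<in> set (Rs s B q)"
      show "q \<le> R" by (rule Rs_ge[OF sizes batches R])
      obtain b where "b \<in> B" "bl s b = q" "R = br s b" using R finite_B[OF batches] by (auto simp: set_Rs)
      then show "\<And>a n. q \<le> a \<Longrightarrow> a + n \<le> R + 1 \<Longrightarrow> \<exists>b\<in>B. ?p < bl s b \<and> bl s b \<le> a \<and> a + n \<le> br s b + 1"
        using q by auto
    qed
    then show "x \<noteq> [] \<and> goodl (\<lambda>a n. \<exists>b\<in>B. ?p < bl s b \<and> bl s b \<le> a \<and> a + n \<le> br s b + 1) x"
      using q by (simp add: blk_def)
  qed
  have "sorted_wrt (\<lambda>x y. hd (blk s B x) \<le> last (blk s B y)) [Suc ?p..<Suc (tape_len s nf)]"
  proof (rule sorted_wrt_mono_rel[OF _ sorted_wrt_upt])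
    fix x y :: nat assume "x < y"
    have "last (blk s B y) \<in> set (blk s B y)" by (rule last_in_set) (simp add: blk_def)
    then have "y \<le> last (blk s B y)" by (rule set_blk)
    then show "hd (blk s B x) \<le> last (blk s B y)" using \<open>x < y\<close> by (simp add: blk_def)
  qed
  then show "sorted_wrt (\<lambda>x y. hd y \<le> last x) (map (blk s B) (rev [Suc ?p..<Suc (tape_len s nf)]))"
    by (simp add: sorted_wrt_map sorted_wrt_rev)
qed

end

context
  fixes s :: "nat \<Rightarrow> nat" and nf :: nat and B :: "(nat \<times> nat) set" and f :: nat
  assumes sizes: "\<forall>i<nf. 0 < s i"
    and batches: "\<forall>b\<in>B. is_minibatch s nf b"
    and f_file: "f < nf"
    and ff: "(f, f) \<in> B"
begin

lemmas bas = basic[OF sizes batches f_file ff]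
lemmas dec = decomp[OF sizes batches f_file ff]

lemma before:
  assumes r: "rd (trajectory s nf B) a n t" and n: "0 < n" and t: "t < length (Apre s nf B (lpos s f))"
  shows "(\<exists>b\<in>B. lpos s f < bl s b \<and> bl s b \<le> a \<and> a + n \<le> br s b + 1)
         \<and> rd (trajectory s nf (B - {(f,f)})) a n t"
proof -
  let ?A = "Apre s nf B (lpos s f)"
  let ?Y = "seg (lpos s f) (rpos s f) @ (lpos s f # (concat (map (excursion (lpos s f)) (Rs s (B - {(f,f)}) (lpos s f))) @ Dsuf s B (lpos s f) @ [2..<tape_len s nf + 2]))"
  have r': "rd (?A @ ?Y) a n t" using r dec(1) by simp
  have bd: "hd ?Y \<le> last ?A" if "?A \<noteq> []" "?Y \<noteq> []"
  proof -
    have "hd ?Y = lpos s f" using seg_ne[OF bas(3)] hd_seg[OF bas(3)] by simp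
    moreover have "lpos s f < last ?A" using setA[OF sizes batches f_file ff] last_in_set[OF that(1)] by blast
    ultimately show ?thesis by simp
  qed
  from rd_split[OF r' n bd] t have rA: "rd ?A a n t" by auto
  have "\<exists>b\<in>B. lpos s f < bl s b \<and> bl s b \<le> a \<and> a + n \<le> br s b + 1"
    using goodA[OF sizes batches f_file ff] rA n unfolding goodl_def by blast
  moreover have "rd (trajectory s nf (B - {(f,f)})) a n t" unfolding dec(2) by (rule rd_app1[OF rA])
  ultimately show ?thesis by blast
qed

lemma after:
  assumes g: "g < nf" "g \<noteq> f" and r: "rd (trajectory s nf B) (lpos s g) (s g) t"
    and t: "length (Apre s nf B (lpos s f)) \<le> t"
  shows "2 * s f \<le> t \<and> rd (trajectory s nf (B - {(f,f)})) (lpos s g) (s g) (t - 2 * s f)"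
proof -
  let ?p = "lpos s f" and ?Rf = "rpos s f"
  let ?A = "Apre s nf B (lpos s f)"
  let ?M = "concat (map (excursion (lpos s f)) (Rs s (B - {(f,f)}) (lpos s f))) @ Dsuf s B (lpos s f) @ [2..<tape_len s nf + 2]"
  have n: "0 < s g" using sizes g by simp
  have r1: "rd (?A @ ([?p..<?Rf+2] @ (rev [Suc ?p..<Suc ?Rf] @ (?p # ?M)))) (lpos s g) (s g) t"
    using r dec(1) by (simp add: seg_def del: upt_Suc)
  have bd1: "hd ([?p..<?Rf+2] @ (rev [Suc ?p..<Suc ?Rf] @ (?p # ?M))) \<le> last ?A" if "?A \<noteq> []"
  proof -
    have "hd ([?p..<?Rf+2] @ (rev [Suc ?p..<Suc ?Rf] @ (?p # ?M))) = ?p" using bas by (simp del: upt_Suc)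
    moreover have "lpos s f < last ?A" using setA[OF sizes batches f_file ff] last_in_set[OF that] by blast
    ultimately show ?thesis by simp
  qed
  have nt: "\<not> (t + s g < length ?A)" using t by simp
  from rd_split[OF r1 n bd1] nt
  have r2: "rd ([?p..<?Rf+2] @ (rev [Suc ?p..<Suc ?Rf] @ (?p # ?M))) (lpos s g) (s g) (t - length ?A)"
    by blast
  have bd2: "hd (rev [Suc ?p..<Suc ?Rf] @ (?p # ?M)) \<le> last [?p..<?Rf+2]"
  proof -
    have "last [?p..<?Rf+2] = ?Rf + 1" using bas by simp
    moreover have "hd (rev [Suc ?p..<Suc ?Rf] @ (?p # ?M)) \<le> ?Rf"
      using bas by (cases "[Suc ?p..<Suc ?Rf] = []") (auto simp: hd_rev simp del: upt_Suc)
    ultimately show ?thesis by simp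
  qed
  have l1: "length [?p..<?Rf+2] = s f + 1" using bas by simp
  have l2: "length (rev [Suc ?p..<Suc ?Rf]) = s f - 1" using bas by simp
  from rd_split[OF r2 n bd2] show ?thesis
  proof
    assume "t - length ?A + s g < length [?p..<?Rf + 2] \<and> rd [?p..<?Rf + 2] (lpos s g) (s g) (t - length ?A)"
    then have "rd [?p..<?Rf + 2] (lpos s g) (s g) (t - length ?A)" by blast
    moreover have "goodl (\<lambda>a n. ?p \<le> a \<and> a + n \<le> ?Rf + 1) [?p..<?Rf + 2]" by (rule good_inc) auto
    ultimately have "?p \<le> lpos s g" "lpos s g + s g \<le> ?Rf + 1" using n unfolding goodl_def by blast+
    then have "f \<le> g" "rpos s g \<le> ?Rf" using ord1[OF sizes f_file g(1)] by (auto simp: rpos_def)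
    moreover have "g \<le> f" using ord2[OF sizes f_file g(1)] calculation(2) by simp
    ultimately show ?thesis using g by simp
  next
    assume a2: "length [?p..<?Rf + 2] \<le> t - length ?A \<and>
      rd (rev [Suc ?p..<Suc ?Rf] @ ?p # ?M) (lpos s g) (s g) (t - length ?A - length [?p..<?Rf + 2])"
    have bd3: "hd (?p # ?M) \<le> last (rev [Suc ?p..<Suc ?Rf])" if "rev [Suc ?p..<Suc ?Rf] \<noteq> []"
    proof -
      have "last (rev [Suc ?p..<Suc ?Rf]) \<in> set (rev [Suc ?p..<Suc ?Rf])" using that by (rule last_in_set)
      then have "Suc ?p \<le> last (rev [Suc ?p..<Suc ?Rf])" by (simp only: set_rev set_upt atLeastLessThan_iff)
      moreover have "hd (?p # ?M) = ?p" by (rule list.sel(1))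
      ultimately show ?thesis by linarith
    qed
    from rd_split[OF a2[THEN conjunct2] n bd3] show ?thesis
    proof
      assume "t - length ?A - length [?p..<?Rf + 2] + s g < length (rev [Suc ?p..<Suc ?Rf]) \<and>
          rd (rev [Suc ?p..<Suc ?Rf]) (lpos s g) (s g) (t - length ?A - length [?p..<?Rf + 2])"
      then show ?thesis using good_dec[of "\<lambda>_ _. False"] n unfolding goodl_def by blast
    next
      assume a3: "length (rev [Suc ?p..<Suc ?Rf]) \<le> t - length ?A - length [?p..<?Rf + 2] \<and>
          rd (?p # ?M) (lpos s g) (s g) (t - length ?A - length [?p..<?Rf + 2] - length (rev [Suc ?p..<Suc ?Rf]))"
      define t3 where "t3 = t - length ?A - length [?p..<?Rf + 2] - length (rev [Suc ?p..<Suc ?Rf])"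
      have r3: "rd (?p # ?M) (lpos s g) (s g) t3" using a3 t3_def by simp
      have c1: "s f + 1 \<le> t - length ?A" using a2[THEN conjunct1] unfolding l1 .
      have c2: "s f - 1 \<le> t - length ?A - (s f + 1)" using a3[THEN conjunct1] unfolding l1 l2 .
      have t3': "t3 = t - length ?A - (s f + 1) - (s f - 1)" unfolding t3_def l1 l2 ..
      have tt: "t = length ?A + 2 * s f + t3" using c1 c2 t3' t bas(5) by linarith
      show ?thesis
      proof (cases "t3 = 0")
        case True
        then have "?p = lpos s g" using rd_Cons0 r3 by simp
        then have "f = g" using lpos_inj[OF sizes f_file g(1)] by simp
        then show ?thesis using g by simp
      next
        case False
        then have "rd ?M (lpos s g) (s g) (t3 - 1)" using rd_Cons r3 by simp
        then have "rd ([?p] @ ?M) (lpos s g) (s g) (length [?p] + (t3 - 1))" by (rule rd_app2)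
        then have "rd (?p # ?M) (lpos s g) (s g) t3" using False by simp
        then have "rd (?A @ (?p # ?M)) (lpos s g) (s g) (length ?A + t3)" by (rule rd_app2)
        then show ?thesis unfolding dec(2) using tt by simp
      qed
    qed
  qed
qed

end

context
  fixes s :: "nat \<Rightarrow> nat" and nf :: nat and B :: "(nat \<times> nat) set" and f :: nat
  assumes sizes: "\<forall>i<nf. 0 < s i"
    and batches: "\<forall>b\<in>B. is_minibatch s nf b"
    and f_file: "f < nf"
    and ff: "(f, f) \<in> B"
begin

lemmas bas' = basic[OF sizes batches f_file ff]
lemmas dec' = decomp[OF sizes batches f_file ff]
lemmas bat' = batches'[OF sizes batches f_file ff]

lemma f_old: "length (Apre s nf B (lpos s f)) \<le> resp s nf B f"
proof (rule ccontr)
  assume "\<not> ?thesis"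
  then have "resp s nf B f < length (Apre s nf B (lpos s f))" by simp
  from before[OF sizes batches f_file ff resp_props(1)[OF sizes batches f_file] bas'(5) this]
  show False by auto
qed

lemma f_new: "resp s nf (B - {(f,f)}) f \<le> length (Apre s nf B (lpos s f)) + 2 * (lpos s f - 1)
    + 2 * (\<Sum>b\<in>{b \<in> B. bl s b < lpos s f}. bsize s b)"
proof (cases "Rs s (B - {(f,f)}) (lpos s f)")
  case Nil
  let ?P = "concat (map (blk s (B - {(f,f)})) (rev [1..<Suc (tape_len s nf)]))"
  have "length ?P = length (Apre s nf B (lpos s f)) + 1 + length (Dsuf s B (lpos s f))"
    unfolding dec'(3) Nil by simp
  moreover have "resp s nf (B - {(f,f)}) f \<le> length ?P - 1 + (lpos s f - 1)"
    by (rule resp_props(2)[OF sizes bat' f_file traj_read[OF sizes bat' f_file]])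
  moreover have "length (Dsuf s B (lpos s f)) \<le> (lpos s f - 1) + 2 * (\<Sum>b\<in>{b \<in> B. bl s b < lpos s f}. bsize s b)"
    by (rule lenD[OF sizes batches])
  ultimately show ?thesis by linarith
next
  case (Cons R' rest)
  let ?p = "lpos s f"
  let ?Z = "concat (map (excursion ?p) rest) @ Dsuf s B ?p @ [2..<tape_len s nf + 2]"
  have "sorted (Rs s B ?p)" by (simp add: Rs_def)
  then have RR: "rpos s f \<le> R'" unfolding Rs_split[OF sizes batches f_file ff] Cons by simp
  have "rd (?p # (excursion ?p R' @ ?Z)) ?p (s f) 0"
    unfolding rd_def
  proof (intro allI impI conjI)
    fix k assume k: "k \<le> s f"
    have le: "length (excursion ?p R') = 2 * (R' + 1 - ?p)" by (rule length_exc)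
    show "0 + k < length (?p # (excursion ?p R' @ ?Z))" using k le RR bas' by simp
    show "(?p # (excursion ?p R' @ ?Z)) ! (0 + k) = ?p + k"
    proof (cases k)
      case 0 then show ?thesis by simp
    next
      case (Suc j)
      have j1: "j < R' + 1 - ?p" using k Suc RR bas' by simp
      then have j2: "j < length (excursion ?p R')" using le by simp
      have "(?p # (excursion ?p R' @ ?Z)) ! (0 + k) = excursion ?p R' ! j" using Suc j2 by (simp add: nth_append)
      also have "\<dots> = [Suc ?p..<R' + 2] ! j" using j1 unfolding excursion_def by (simp add: nth_append del: upt_Suc)
      also have "\<dots> = Suc ?p + j" using j1 by (intro nth_upt) simp
      finally show ?thesis using Suc by simp
    qed
  qed
  then have "rd (Apre s nf B ?p @ (?p # (excursion ?p R' @ ?Z))) ?p (s f) (length (Apre s nf B ?p) + 0)"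
    by (rule rd_app2)
  then have "rd (trajectory s nf (B - {(f,f)})) ?p (s f) (length (Apre s nf B ?p))"
    unfolding dec'(2) Cons by simp
  then have "resp s nf (B - {(f,f)}) f \<le> length (Apre s nf B ?p)"
    by (rule resp_props(2)[OF sizes bat' f_file])
  then show ?thesis by linarith
qed

lemma g_le:
  assumes g: "g < nf" "g \<noteq> f"
  shows "resp s nf (B - {(f,f)}) g \<le> resp s nf B g"
proof -
  let ?t = "resp s nf B g"
  have r: "rd (trajectory s nf B) (lpos s g) (s g) ?t" by (rule resp_props(1)[OF sizes batches g(1)])
  have n: "0 < s g" using sizes g by simp
  show ?thesis
  proof (cases "?t < length (Apre s nf B (lpos s f))")
    case True
    then have "rd (trajectory s nf (B - {(f,f)})) (lpos s g) (s g) ?t"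
      using before[OF sizes batches f_file ff r n] by blast
    then show ?thesis by (rule resp_props(2)[OF sizes bat' g(1)])
  next
    case False
    then have "rd (trajectory s nf (B - {(f,f)})) (lpos s g) (s g) (?t - 2 * s f)"
      using after[OF sizes batches f_file ff g r] by simp
    then have "resp s nf (B - {(f,f)}) g \<le> ?t - 2 * s f" by (rule resp_props(2)[OF sizes bat' g(1)])
    then show ?thesis by simp
  qed
qed

lemma g_gain:
  assumes g: "g < nf" "g \<noteq> f"
    and nc: "\<not> (\<exists>b\<in>B. lpos s f < bl s b \<and> bl s b \<le> lpos s g \<and> lpos s g + s g \<le> br s b + 1)"
  shows "resp s nf (B - {(f,f)}) g + 2 * s f \<le> resp s nf B g"
proof -
  let ?t = "resp s nf B g"
  have r: "rd (trajectory s nf B) (lpos s g) (s g) ?t" by (rule resp_props(1)[OF sizes batches g(1)])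
  have n: "0 < s g" using sizes g by simp
  have "\<not> ?t < length (Apre s nf B (lpos s f))"
    using before[OF sizes batches f_file ff r n] nc by blast
  then have a: "2 * s f \<le> ?t \<and> rd (trajectory s nf (B - {(f,f)})) (lpos s g) (s g) (?t - 2 * s f)"
    using after[OF sizes batches f_file ff g r] by simp
  then have "resp s nf (B - {(f,f)}) g \<le> ?t - 2 * s f" using resp_props(2)[OF sizes bat' g(1)] by blast
  then show ?thesis using a by linarith
qed

end

theorem corollary4:
  fixes s :: "nat \<Rightarrow> nat" and nf :: nat and R :: "'r set" and fo :: "'r \<Rightarrow> nat"
    and B :: "(nat \<times> nat) set" and f :: nat
  assumes sizes: "\<forall>i<nf. 0 < s i"
    and finR: "finite R"
    and req_files: "\<forall>r\<in>R. fo r < nf"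
    and batches: "\<forall>b\<in>B. is_minibatch s nf b"
    and f_file: "f < nf"
    and ff: "(f, f) \<in> B"
    and cond: "nreq R fo f * (lpos s f + (\<Sum>b\<in>{b \<in> B. bl s b < lpos s f}. bsize s b))
               < s f * ((\<Sum>g\<in>{g. g < nf \<and> lpos s g < lpos s f}. nreq R fo g)
                        + (\<Sum>g\<in>{g. g < nf \<and> g \<notin> files_of_set s nf B \<and> lpos s f < lpos s g}. nreq R fo g))"
  shows "v s nf R fo (B - {(f, f)}) < v s nf R fo B"
proof -
  let ?p = "lpos s f"
  let ?B' = "B - {(f,f)}"
  define Sc where "Sc = (\<Sum>b\<in>{b \<in> B. bl s b < lpos s f}. bsize s b)"
  define G1 where "G1 = {g. g < nf \<and> lpos s g < lpos s f}"
  define G2 where "G2 = {g. g < nf \<and> g \<notin> files_of_set s nf B \<and> lpos s f < lpos s g}"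
  define G where "G = G1 \<union> G2"
  define X where "X = (\<Sum>g\<in>G1. nreq R fo g) + (\<Sum>g\<in>G2. nreq R fo g)"
  define c where "c = 2 * (?p + Sc)"
  have fG: "f \<notin> G" unfolding G_def G1_def G2_def by auto
  have per: "resp s nf ?B' (fo r) + (if fo r \<in> G then 2 * s f else 0)
          \<le> resp s nf B (fo r) + (if fo r = f then c else 0)" if r: "r \<in> R" for r
  proof -
    have g: "fo r < nf" using req_files r by blast
    show ?thesis
    proof (cases "fo r = f")
      case True
      have h: "resp s nf ?B' f \<le> length (Apre s nf B ?p) + 2 * (?p - 1) + 2 * Sc"
        using f_new[OF sizes batches f_file ff] unfolding Sc_def .
      have "resp s nf ?B' f \<le> resp s nf B f + c"
      proof -
        have "length (Apre s nf B ?p) + 2 * (?p - 1) + 2 * Sc \<le> resp s nf B f + 2 * (?p + Sc)"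
          using f_old[OF sizes batches f_file ff] by simp
        then show ?thesis using h unfolding c_def by (rule order.trans[rotated])
      qed
      then show ?thesis using True fG by simp
    next
      case False
      show ?thesis
      proof (cases "fo r \<in> G")
        case True
        have nc: "\<not> (\<exists>b\<in>B. ?p < bl s b \<and> bl s b \<le> lpos s (fo r) \<and> lpos s (fo r) + s (fo r) \<le> br s b + 1)"
        proof
          assume "\<exists>b\<in>B. ?p < bl s b \<and> bl s b \<le> lpos s (fo r) \<and> lpos s (fo r) + s (fo r) \<le> br s b + 1"
          then obtain b where b: "b \<in> B" "?p < bl s b" "bl s b \<le> lpos s (fo r)" "lpos s (fo r) + s (fo r) \<le> br s b + 1"
            by blast
          show False
          proof (cases "fo r \<in> G1")
            case True then show False using b unfolding G1_def by simp
          next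
            case False
            then have G2: "fo r \<in> G2" using \<open>fo r \<in> G\<close> unfolding G_def by simp
            have "fo r \<in> files_of s nf b" unfolding files_of_def rpos_def using b g by auto
            then have "fo r \<in> files_of_set s nf B" unfolding files_of_set_def using b(1) by blast
            then show False using G2 unfolding G2_def by simp
          qed
        qed
        have "resp s nf ?B' (fo r) + 2 * s f \<le> resp s nf B (fo r)"
          by (rule g_gain[OF sizes batches f_file ff g False nc])
        then show ?thesis using True False by simp
      next
        case nG: False
        have "resp s nf ?B' (fo r) \<le> resp s nf B (fo r)" by (rule g_le[OF sizes batches f_file ff g False])
        then show ?thesis using nG False by simp
      qed
    qed
  qed
  have sum1: "(\<Sum>r\<in>R. resp s nf ?B' (fo r)) + (\<Sum>r\<in>R. (if fo r \<in> G then 2 * s f else 0))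
      \<le> (\<Sum>r\<in>R. resp s nf B (fo r)) + (\<Sum>r\<in>R. (if fo r = f then c else 0))"
    unfolding sum.distrib[symmetric] by (rule sum_mono) (rule per)
  have finG: "finite G" unfolding G_def G1_def G2_def by (rule finite_subset[of _ "{..<nf}"]) auto
  have e1: "(\<Sum>r\<in>R. (if fo r \<in> G then 2 * s f else 0)) = 2 * s f * card {r \<in> R. fo r \<in> G}"
    using finR by (simp add: sum.inter_filter[symmetric])
  have e2: "(\<Sum>r\<in>R. (if fo r = f then c else 0)) = c * nreq R fo f"
    using finR by (simp add: sum.inter_filter[symmetric] nreq_def)
  have "card {r \<in> R. fo r \<in> G} = (\<Sum>g\<in>G. (\<Sum>x\<in>{x \<in> {r \<in> R. fo r \<in> G}. fo x = g}. 1))"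
    by (subst sum.group) (use finR finG in auto)
  also have "\<dots> = (\<Sum>g\<in>G. nreq R fo g)"
    unfolding nreq_def by (intro sum.cong refl) (auto intro: arg_cong[where f = card])
  also have "\<dots> = X"
    unfolding X_def G_def
  proof (rule sum.union_disjoint)
    show "finite G1" unfolding G1_def by (rule finite_subset[of _ "{..<nf}"]) auto
    show "finite G2" unfolding G2_def by (rule finite_subset[of _ "{..<nf}"]) auto
    show "G1 \<inter> G2 = {}" unfolding G1_def G2_def by auto
  qed
  finally have cX: "card {r \<in> R. fo r \<in> G} = X" .
  have cond': "nreq R fo f * (?p + Sc) < s f * X" using cond unfolding Sc_def X_def G1_def G2_def .
  have "c * nreq R fo f = 2 * (nreq R fo f * (?p + Sc))" unfolding c_def by simp
  moreover have "2 * s f * X = 2 * (s f * X)" by simp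
  ultimately have "c * nreq R fo f < 2 * s f * X" using cond' by linarith
  then show ?thesis using sum1 unfolding v_def e1 e2 cX by linarith
qed

end
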